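(* For every integer $d\ge 1$, \[ \sum_{m=1}^{d} q^{\binom{m}{2}}(1-q^m) \begin{bmatrix}2d\\ d+m\end{bmatrix}_q=\frac{1-q^d}{1+q^d} \begin{bmatrix}2d\\ d\end{bmatrix}_q. \]
   Context: Notation: $(a;q)_n=(1-a)(1-aq)\cdots(1-aq^{n-1})$ and $\begin{bmatrix}n\\k\end{bmatrix}_q=\frac{(q;q)_n}{(q;q)_k(q;q)_{n-k}}$ for $n\ge k\ge0$ and $0$ otherwise. *)

theory Defs
  imports Main
begin

definition qpoch :: "'a::comm_ring_1 \<Rightarrow> 'a \<Rightarrow> nat \<Rightarrow> 'a" where
  "qpoch a q n = (\<Prod>i<n. 1 - a * q ^ i)"

definition qbinom :: "nat \<Rightarrow> nat \<Rightarrow> 'a::field \<Rightarrow> 'a" where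
  "qbinom n k q = (if k \<le> n then qpoch q q n / (qpoch q q k * qpoch q q (n - k)) else 0)"

end

theory Submission
  imports Defs
begin

lemma qpoch_Suc: "qpoch a q (Suc n) = qpoch a q n * (1 - a * q ^ n)"
  by (simp add: qpoch_def)

lemma qpoch_nz:
  fixes q :: "'a::field"
  assumes "\<And>j. 1 \<le> j \<Longrightarrow> j \<le> n \<Longrightarrow> q ^ j \<noteq> 1"
  shows "qpoch q q n \<noteq> 0"
proof -
  have "\<forall>i<n. 1 - q * q ^ i \<noteq> 0"
  proof (intro allI impI)
    fix i assume "i < n"
    then have "q ^ Suc i \<noteq> 1" using assms[of "Suc i"] by simp
    then show "1 - q * q ^ i \<noteq> 0" by simp
  qed
  then show ?thesis unfolding qpoch_def by (simp add: prod_zero_iff)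
qed

lemma alg0:
  fixes q x y N A R u v :: "'a::field"
  assumes "A \<noteq> 0" "R \<noteq> 0" "u \<noteq> 0" "v \<noteq> 0"
  shows "N * (1 - (1 - u) * (1 - v)) / (A * u * (R * v))
           = N / (A * (R * v)) + (1 - u) * N / (A * u * R)
    \<and> N * (1 - (1 - u) * (1 - v)) / (A * u * (R * v))
           = (1 - v) * N / (A * (R * v)) + N / (A * u * R)"
  using assms by (simp add: field_simps)

lemma alg:
  fixes q x y N A R :: "'a::field"
  assumes "A \<noteq> 0" "R \<noteq> 0" "1 - q * x \<noteq> 0" "1 - q * y \<noteq> 0"
  shows "N * (1 - q * (x * q * y)) / (A * (1 - q * x) * (R * (1 - q * y)))
           = N / (A * (R * (1 - q * y))) + q * x * N / (A * (1 - q * x) * R)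
    \<and> N * (1 - q * (x * q * y)) / (A * (1 - q * x) * (R * (1 - q * y)))
           = q * y * N / (A * (R * (1 - q * y))) + N / (A * (1 - q * x) * R)"
proof -
  define u where "u = 1 - q * x"
  define v where "v = 1 - q * y"
  have qx: "q * x = 1 - u" and qy: "q * y = 1 - v" by (simp_all add: u_def v_def)
  have e: "q * (x * q * y) = (q * x) * (q * y)" by (simp add: algebra_simps)
  have u0: "u \<noteq> 0" and v0: "v \<noteq> 0" using assms by (simp_all add: u_def v_def)
  have uu: "1 - (1 - u) = u" and vv: "1 - (1 - v) = v" by simp_all
  show ?thesis unfolding e qx qy uu vv using alg0[OF assms(1,2) u0 v0, of N] by blast
qed

lemma pascal_lt:
  fixes q :: "'a::field"
  assumes h: "\<And>j. 1 \<le> j \<Longrightarrow> j \<le> Suc (k + Suc r) \<Longrightarrow> q ^ j \<noteq> 1"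
  shows "qbinom (Suc (k + Suc r)) (Suc k) q = qbinom (k + Suc r) k q + q ^ Suc k * qbinom (k + Suc r) (Suc k) q
    \<and> qbinom (Suc (k + Suc r)) (Suc k) q = q ^ Suc r * qbinom (k + Suc r) k q + qbinom (k + Suc r) (Suc k) q"
proof -
  have n2: "qpoch q q k \<noteq> 0" by (rule qpoch_nz) (use h in auto)
  have n3: "qpoch q q r \<noteq> 0" by (rule qpoch_nz) (use h in auto)
  have f1: "1 - q * q ^ k \<noteq> 0" using h[of "Suc k"] by auto
  have f2: "1 - q * q ^ r \<noteq> 0" using h[of "Suc r"] by auto
  have e1: "Suc (k + Suc r) - Suc k = Suc r" by simp
  have e2: "k + Suc r - k = Suc r" by simp
  have e3: "k + Suc r - Suc k = r" by simp
  have qn: "q ^ (k + Suc r) = q ^ k * q * q ^ r" by (simp add: power_add)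
  have B1: "qbinom (Suc (k + Suc r)) (Suc k) q = qpoch q q (k + Suc r) * (1 - q * (q ^ k * q * q ^ r))
     / (qpoch q q k * (1 - q * q ^ k) * (qpoch q q r * (1 - q * q ^ r)))"
    unfolding qbinom_def e1 qpoch_Suc[of q q "k + Suc r"] qn by (simp add: qpoch_Suc)
  have B2: "qbinom (k + Suc r) k q = qpoch q q (k + Suc r) / (qpoch q q k * (qpoch q q r * (1 - q * q ^ r)))"
    unfolding qbinom_def e2 by (simp add: qpoch_Suc)
  have B3: "qbinom (k + Suc r) (Suc k) q = qpoch q q (k + Suc r) / (qpoch q q k * (1 - q * q ^ k) * qpoch q q r)"
    unfolding qbinom_def e3 by (simp add: qpoch_Suc)
  show ?thesis unfolding B1 B2 B3 power_Suc times_divide_eq_right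
    using alg[OF n2 n3 f1 f2, of "qpoch q q (k + Suc r)"] by blast
qed

lemma pascal:
  fixes q :: "'a::field"
  assumes k1: "1 \<le> k" and kn: "k \<le> n"
    and h: "\<And>j. 1 \<le> j \<Longrightarrow> j \<le> n \<Longrightarrow> q ^ j \<noteq> 1"
  shows "qbinom n k q = qbinom (n-1) (k-1) q + q ^ k * qbinom (n-1) k q
    \<and> qbinom n k q = q ^ (n-k) * qbinom (n-1) (k-1) q + qbinom (n-1) k q"
proof (cases "k = n")
  case True
  then obtain n' where n': "n = Suc n'" using k1 by (cases n) auto
  have "qpoch q q n \<noteq> 0" by (rule qpoch_nz) (use h in auto)
  moreover have "qpoch q q n' \<noteq> 0" by (rule qpoch_nz) (use h n' in auto)
  ultimately show ?thesis using True n' by (simp add: qbinom_def)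
next
  case False
  define k' where "k' = k - 1"
  define r where "r = n - k - 1"
  have kr: "k = Suc k'" "n = Suc (k' + Suc r)"
    using k1 kn False unfolding k'_def r_def by arith+
  have "n - k = Suc r" using kr by simp
  have h': "\<And>j. 1 \<le> j \<Longrightarrow> j \<le> Suc (k' + Suc r) \<Longrightarrow> q ^ j \<noteq> 1" using h kr by simp
  have X: "qbinom (Suc (k' + Suc r)) (Suc k') q = qbinom (k' + Suc r) k' q + q ^ Suc k' * qbinom (k' + Suc r) (Suc k') q
    \<and> qbinom (Suc (k' + Suc r)) (Suc k') q = q ^ Suc r * qbinom (k' + Suc r) k' q + qbinom (k' + Suc r) (Suc k') q"
    by (rule pascal_lt[of k' r q, OF h'])
  have e: "Suc (k' + Suc r) - Suc k' = Suc r" by simp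
  show ?thesis unfolding kr e diff_Suc_1 by (rule X)
qed

theorem corollary1p5:
  fixes q :: "'a::field" and d :: nat
  assumes "d \<ge> 1"
    and "\<And>j. 1 \<le> j \<Longrightarrow> j \<le> 2 * d \<Longrightarrow> q ^ j \<noteq> 1"
    and "1 + q ^ d \<noteq> 0"
  shows "(\<Sum>m=1..d. q ^ (m choose 2) * (1 - q ^ m) * qbinom (2*d) (d+m) q)
         = (1 - q ^ d) / (1 + q ^ d) * qbinom (2*d) d q"
proof -
  define a where "a m = qbinom (2*d-1) (d+m-1) q" for m
  define f where "f m = q ^ (m choose 2) * a m" for m
  have step: "q ^ (m choose 2) * (1 - q ^ m) * qbinom (2*d) (d+m) q = (1 - q^d) * (f m - f (Suc m))"
    if m: "m \<in> {1..d}" for m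
  proof -
    have P: "qbinom (2*d) (d+m) q = a m + q ^ (d+m) * a (Suc m)
          \<and> qbinom (2*d) (d+m) q = q ^ (d-m) * a m + a (Suc m)"
      using pascal[of "d+m" "2*d" q] m assms(2) unfolding a_def
      by (auto simp: mult_2)
    have c: "Suc m choose 2 = (m choose 2) + m"
      by (cases m) (auto simp: numeral_2_eq_2)
    have pd: "q ^ d = q ^ m * q ^ (d-m)" using m by (simp add: power_add[symmetric])
    have "(1 - q ^ m) * qbinom (2*d) (d+m) q
        = qbinom (2*d) (d+m) q - q^m * qbinom (2*d) (d+m) q" by (simp add: algebra_simps)
    also have "\<dots> = (a m + q ^ (d+m) * a (Suc m)) - q^m * (q ^ (d-m) * a m + a (Suc m))"
      using P by metis
    also have "\<dots> = (1 - q^d) * (a m - q^m * a (Suc m))"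
      using pd by (simp add: algebra_simps power_add)
    finally have X: "(1 - q ^ m) * qbinom (2*d) (d+m) q = (1 - q^d) * (a m - q^m * a (Suc m))" .
    have "q ^ (m choose 2) * (1 - q ^ m) * qbinom (2*d) (d+m) q
        = q ^ (m choose 2) * ((1 - q ^ m) * qbinom (2*d) (d+m) q)" by (simp add: mult.assoc)
    also have "\<dots> = q ^ (m choose 2) * ((1 - q^d) * (a m - q^m * a (Suc m)))" by (simp only: X)
    also have "\<dots> = (1 - q^d) * (f m - f (Suc m))"
      unfolding f_def c power_add by (simp add: algebra_simps)
    finally show ?thesis .
  qed
  have "(\<Sum>m=1..d. q ^ (m choose 2) * (1 - q ^ m) * qbinom (2*d) (d+m) q)
      = (1 - q^d) * (\<Sum>m=1..d. f m - f (Suc m))"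
    using step by (simp add: sum_distrib_left)
  also have "(\<Sum>m=1..d. f m - f (Suc m)) = - (\<Sum>m=1..d. f (Suc m) - f m)"
    by (simp add: sum_negf[symmetric])
  also have "\<dots> = f 1 - f (Suc d)"
    using sum_Suc_diff[of 1 d f] assms(1) by simp
  also have "f (Suc d) = 0" unfolding f_def a_def qbinom_def using assms(1) by (auto simp: mult_2)
  also have "f 1 = qbinom (2*d-1) d q" unfolding f_def a_def by (simp add: numeral_2_eq_2)
  finally have L: "(\<Sum>m=1..d. q ^ (m choose 2) * (1 - q ^ m) * qbinom (2*d) (d+m) q)
      = (1 - q^d) * qbinom (2*d-1) d q" by simp
  have sym: "qbinom (2*d-1) (d-1) q = qbinom (2*d-1) d q"
    unfolding qbinom_def using assms(1)
    by (simp add: mult_2 algebra_simps Suc_diff_le; auto)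
  have "qbinom (2*d) d q = qbinom (2*d-1) (d-1) q + q^d * qbinom (2*d-1) d q"
    using pascal[of d "2*d" q] assms by auto
  then have R: "qbinom (2*d) d q = (1 + q^d) * qbinom (2*d-1) d q"
    using sym by (simp add: algebra_simps)
  show ?thesis using L R assms(3) by simp
qed

end
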